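(* Let $\beta\in[0,1]$ and let $f\in C^{3+\beta}$ with $f'>0$ on $[A,B]$. Then there is a constant $C$ depending only on $f$ (and $[A,B]$) such that for all $\theta,x_1,x_2,x_3\in[A,B]$, $$ \left|\frac{f''(\theta)}{2f'(\theta)}+\frac{f'''(\theta)}{6f'(\theta)}(x_1+x_2+x_3-3\theta)-\left(\frac{f''(\theta)}{2f'(\theta)}\right)^2(x_2+x_3-2\theta)-\frac{f''(x_1)}{2f'(x_1)}-\frac{1}{6}Sf(x_1)(x_2+x_3-2x_1)\right|\le C\Delta_\theta^{1+\beta}, $$ where $\Delta_\theta=\max\{x_1,x_2,x_3,\theta\}-\min\{x_1,x_2,x_3,\theta\}$.
   Context: The Schwarzian derivative is $Sf=\frac{f'''}{f'}-\frac{3}{2}\left(\frac{f''}{f'}\right)^2$. $C^{3+\beta}$ means three times differentiable with $\beta$-Hölder third derivative. *)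

theory Defs
  imports "HOL-Analysis.Analysis"
begin

definition C3_holder :: "real \<Rightarrow> real \<Rightarrow> real \<Rightarrow> (real \<Rightarrow> real) \<Rightarrow> (real \<Rightarrow> real)
    \<Rightarrow> (real \<Rightarrow> real) \<Rightarrow> (real \<Rightarrow> real) \<Rightarrow> bool" where
  "C3_holder \<beta> A B f f1 f2 f3 \<longleftrightarrow>
     (\<forall>x\<in>{A..B}. (f has_real_derivative f1 x) (at x within {A..B}) \<and>
                 (f1 has_real_derivative f2 x) (at x within {A..B}) \<and>
                 (f2 has_real_derivative f3 x) (at x within {A..B})) \<and>
     continuous_on {A..B} f3 \<and>
     (\<exists>H. \<forall>x\<in>{A..B}. \<forall>y\<in>{A..B}. \<bar>f3 x - f3 y\<bar> \<le> H * \<bar>x - y\<bar> powr \<beta>)"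

definition schwarzian :: "(real \<Rightarrow> real) \<Rightarrow> (real \<Rightarrow> real) \<Rightarrow> (real \<Rightarrow> real) \<Rightarrow> real \<Rightarrow> real" where
  "schwarzian f1 f2 f3 x = f3 x / f1 x - 3/2 * (f2 x / f1 x)^2"

end

theory Submission imports Defs begin

definition hol :: "real \<Rightarrow> real set \<Rightarrow> (real \<Rightarrow> real) \<Rightarrow> bool" where
  "hol b S u \<longleftrightarrow> (\<exists>K\<ge>0. \<forall>x\<in>S. \<forall>y\<in>S. \<bar>u x - u y\<bar> \<le> K * \<bar>x - y\<bar> powr b)"

definition bdd :: "real set \<Rightarrow> (real \<Rightarrow> real) \<Rightarrow> bool" where
  "bdd S u \<longleftrightarrow> (\<exists>M. \<forall>x\<in>S. \<bar>u x\<bar> \<le> M)"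

lemma hol_add: "hol b S u \<Longrightarrow> hol b S v \<Longrightarrow> hol b S (\<lambda>x. u x + v x)"
proof -
  assume "hol b S u" "hol b S v"
  then obtain K L where K: "K \<ge> 0" "\<forall>x\<in>S. \<forall>y\<in>S. \<bar>u x - u y\<bar> \<le> K * \<bar>x - y\<bar> powr b"
    and L: "L \<ge> 0" "\<forall>x\<in>S. \<forall>y\<in>S. \<bar>v x - v y\<bar> \<le> L * \<bar>x - y\<bar> powr b"
    unfolding hol_def by blast
  show ?thesis unfolding hol_def
  proof (intro exI[of _ "K+L"] conjI ballI)
    fix x y assume "x \<in> S" "y \<in> S"
    then have "\<bar>u x - u y\<bar> \<le> K * \<bar>x - y\<bar> powr b" "\<bar>v x - v y\<bar> \<le> L * \<bar>x - y\<bar> powr b"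
      using K L by auto
    then show "\<bar>u x + v x - (u y + v y)\<bar> \<le> (K + L) * \<bar>x - y\<bar> powr b"
      by (simp add: algebra_simps)
  qed (use K L in auto)
qed

lemma hol_scale: "hol b S u \<Longrightarrow> hol b S (\<lambda>x. c * u x)"
proof -
  assume "hol b S u"
  then obtain K where K: "K \<ge> 0" "\<forall>x\<in>S. \<forall>y\<in>S. \<bar>u x - u y\<bar> \<le> K * \<bar>x - y\<bar> powr b"
    unfolding hol_def by blast
  show ?thesis unfolding hol_def
  proof (intro exI[of _ "\<bar>c\<bar>*K"] conjI ballI)
    fix x y assume "x \<in> S" "y \<in> S"
    then have "\<bar>u x - u y\<bar> \<le> K * \<bar>x - y\<bar> powr b" using K by auto
    then have "\<bar>c\<bar> * \<bar>u x - u y\<bar> \<le> \<bar>c\<bar> * (K * \<bar>x - y\<bar> powr b)"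
      by (simp add: mult_left_mono)
    then show "\<bar>c * u x - c * u y\<bar> \<le> \<bar>c\<bar> * K * \<bar>x - y\<bar> powr b"
      by (simp add: abs_mult[symmetric] right_diff_distrib mult.assoc)
  qed (use K in auto)
qed

lemma hol_mult: "hol b S u \<Longrightarrow> hol b S v \<Longrightarrow> bdd S u \<Longrightarrow> bdd S v \<Longrightarrow> hol b S (\<lambda>x. u x * v x)"
proof -
  assume "hol b S u" "hol b S v" "bdd S u" "bdd S v"
  then obtain K L M N where K: "K \<ge> 0" "\<forall>x\<in>S. \<forall>y\<in>S. \<bar>u x - u y\<bar> \<le> K * \<bar>x - y\<bar> powr b"
    and L: "L \<ge> 0" "\<forall>x\<in>S. \<forall>y\<in>S. \<bar>v x - v y\<bar> \<le> L * \<bar>x - y\<bar> powr b"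
    and M: "\<forall>x\<in>S. \<bar>u x\<bar> \<le> M" and N: "\<forall>x\<in>S. \<bar>v x\<bar> \<le> N"
    unfolding hol_def bdd_def by blast
  show ?thesis unfolding hol_def
  proof (intro exI[of _ "\<bar>M\<bar>*L + \<bar>N\<bar>*K"] conjI ballI)
    fix x y assume xy: "x \<in> S" "y \<in> S"
    let ?d = "\<bar>x - y\<bar> powr b"
    have 1: "\<bar>u x\<bar> * \<bar>v x - v y\<bar> \<le> \<bar>M\<bar> * (L * ?d)"
      using xy K L M by (intro mult_mono) (auto intro: order_trans)
    have 2: "\<bar>v y\<bar> * \<bar>u x - u y\<bar> \<le> \<bar>N\<bar> * (K * ?d)"
      using xy K L N by (intro mult_mono) (auto intro: order_trans)
    have "u x * v x - u y * v y = u x * (v x - v y) + v y * (u x - u y)" by algebra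
    then have "\<bar>u x * v x - u y * v y\<bar> \<le> \<bar>u x\<bar> * \<bar>v x - v y\<bar> + \<bar>v y\<bar> * \<bar>u x - u y\<bar>"
      by (metis abs_mult abs_triangle_ineq)
    with 1 2 show "\<bar>u x * v x - u y * v y\<bar> \<le> (\<bar>M\<bar> * L + \<bar>N\<bar> * K) * ?d"
      by (simp add: algebra_simps)
  qed (use K L in auto)
qed

lemma hol_inv: assumes "hol b S u" "m > 0" "\<forall>x\<in>S. u x \<ge> m"
  shows "hol b S (\<lambda>x. 1 / u x)"
proof -
  obtain K where K: "K \<ge> 0" "\<forall>x\<in>S. \<forall>y\<in>S. \<bar>u x - u y\<bar> \<le> K * \<bar>x - y\<bar> powr b"
    using assms unfolding hol_def by blast
  show ?thesis unfolding hol_def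
  proof (intro exI[of _ "K / m^2"] conjI ballI)
    fix x y assume xy: "x \<in> S" "y \<in> S"
    have ux: "u x \<ge> m" "u y \<ge> m" using xy assms by auto
    have "m * m \<le> u x * u y" using ux assms by (intro mult_mono) auto
    have e: "1 / u x - 1 / u y = (u y - u x) / (u x * u y)" using ux assms by (simp add: field_simps)
    have "\<bar>u y - u x\<bar> / (u x * u y) \<le> \<bar>u y - u x\<bar> / (m * m)"
      using \<open>m*m \<le> _\<close> assms ux by (intro divide_left_mono) (auto intro: mult_pos_pos)
    also have "\<dots> \<le> K * \<bar>x - y\<bar> powr b / (m*m)"
      using K xy assms by (intro divide_right_mono) (auto simp: abs_minus_commute)
    finally show "\<bar>1 / u x - 1 / u y\<bar> \<le> K / m^2 * \<bar>x - y\<bar> powr b"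
      using e ux assms by (simp add: power2_eq_square abs_divide abs_mult)
  qed (use K in auto)
qed

lemma lip_hol: assumes "S \<subseteq> {A..B}" "0 \<le> b" "b \<le> 1"
  "\<forall>x\<in>S. \<forall>y\<in>S. \<bar>u x - u y\<bar> \<le> L * \<bar>x - y\<bar>"
  shows "hol b S u"
  unfolding hol_def
proof (intro exI[of _ "max L 0 * (B - A) powr (1 - b)"] conjI ballI)
  fix x y assume xy: "x \<in> S" "y \<in> S"
  let ?d = "\<bar>x - y\<bar>"
  have dle: "?d \<le> B - A" proof -
    have "x \<in> {A..B}" "y \<in> {A..B}" using xy assms(1) by auto
    then show ?thesis by auto
  qed
  show "\<bar>u x - u y\<bar> \<le> max L 0 * (B - A) powr (1 - b) * ?d powr b"
  proof (cases "?d = 0")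
    case True then show ?thesis using assms(4) xy by auto
  next
    case False
    have "\<bar>u x - u y\<bar> \<le> max L 0 * ?d" using assms(4) xy
      by (meson abs_ge_zero max.cobounded1 mult_right_mono order_trans)
    also have "?d = ?d powr b * ?d powr (1 - b)" using False by (simp add: powr_add[symmetric])
    also have "max L 0 * (?d powr b * ?d powr (1 - b)) \<le> max L 0 * (?d powr b * (B - A) powr (1 - b))"
      using dle assms by (intro mult_left_mono powr_mono2) auto
    finally show ?thesis by (simp add: ac_simps)
  qed
qed simp

lemma cont_bdd: "continuous_on {A..B} u \<Longrightarrow> bdd {A..B} u"
  unfolding bdd_def
  using compact_imp_bounded[OF compact_continuous_image[of "{A..B}" u]] bounded_real by auto

lemma deriv_lip: assumes "\<forall>x\<in>{A..B}. (u has_real_derivative u' x) (at x within {A..B})"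
  "continuous_on {A..B} u'"
  shows "\<exists>L. \<forall>x\<in>{A..B}. \<forall>y\<in>{A..B}. \<bar>u x - u y\<bar> \<le> L * \<bar>x - y\<bar>"
proof -
  obtain M where M: "\<forall>x\<in>{A..B}. \<bar>u' x\<bar> \<le> M" using cont_bdd[OF assms(2)] bdd_def by auto
  show ?thesis
    using field_differentiable_bound[of "{A..B}" u u' M] assms(1) M by (intro exI[of _ M]) auto
qed

lemma bdd_mult: "bdd S u \<Longrightarrow> bdd S v \<Longrightarrow> bdd S (\<lambda>x. u x * v x)"
  unfolding bdd_def
proof -
  assume "\<exists>M. \<forall>x\<in>S. \<bar>u x\<bar> \<le> M" "\<exists>M. \<forall>x\<in>S. \<bar>v x\<bar> \<le> M"
  then obtain M N where "\<forall>x\<in>S. \<bar>u x\<bar> \<le> M" "\<forall>x\<in>S. \<bar>v x\<bar> \<le> N" by blast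
  then have "\<forall>x\<in>S. \<bar>u x * v x\<bar> \<le> M * N"
    by (auto simp: abs_mult intro!: mult_mono intro: order_trans)
  then show "\<exists>M. \<forall>x\<in>S. \<bar>u x * v x\<bar> \<le> M" by blast
qed

theorem lemma1:
  fixes \<beta> A B :: real and f f1 f2 f3 :: "real \<Rightarrow> real"
  assumes "0 \<le> \<beta>" "\<beta> \<le> 1"
    and "C3_holder \<beta> A B f f1 f2 f3"
    and "\<forall>x\<in>{A..B}. f1 x > 0"
  shows "\<exists>C. \<forall>\<theta>\<in>{A..B}. \<forall>x1\<in>{A..B}. \<forall>x2\<in>{A..B}. \<forall>x3\<in>{A..B}.
    \<bar>f2 \<theta> / (2 * f1 \<theta>) + f3 \<theta> / (6 * f1 \<theta>) * (x1 + x2 + x3 - 3 * \<theta>)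
      - (f2 \<theta> / (2 * f1 \<theta>))^2 * (x2 + x3 - 2 * \<theta>)
      - f2 x1 / (2 * f1 x1) - 1/6 * schwarzian f1 f2 f3 x1 * (x2 + x3 - 2 * x1)\<bar>
    \<le> C * (Max {x1, x2, x3, \<theta>} - Min {x1, x2, x3, \<theta>}) powr (1 + \<beta>)"
proof (cases "A \<le> B")
  case False
  then show ?thesis by auto
next
  case AB: True
  define S where "S = {A..B}"
  have d1: "\<And>x. x \<in> S \<Longrightarrow> (f1 has_real_derivative f2 x) (at x within S)"
   and d2: "\<And>x. x \<in> S \<Longrightarrow> (f2 has_real_derivative f3 x) (at x within S)"
   and c3: "continuous_on S f3"
    using assms(3) unfolding C3_holder_def S_def by auto
  obtain H where H: "\<forall>x\<in>S. \<forall>y\<in>S. \<bar>f3 x - f3 y\<bar> \<le> H * \<bar>x - y\<bar> powr \<beta>"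
    using assms(3) unfolding C3_holder_def S_def by auto
  have pos: "\<And>x. x \<in> S \<Longrightarrow> f1 x > 0" using assms(4) S_def by auto
  have c1: "continuous_on S f1" by (rule DERIV_continuous_on[OF d1])
  have c2: "continuous_on S f2" by (rule DERIV_continuous_on[OF d2])
  have hol3: "hol \<beta> S f3" unfolding hol_def
  proof (intro exI[of _ "max H 0"] conjI ballI)
    fix x y assume "x \<in> S" "y \<in> S"
    then have "\<bar>f3 x - f3 y\<bar> \<le> H * \<bar>x - y\<bar> powr \<beta>" using H by auto
    also have "\<dots> \<le> max H 0 * \<bar>x - y\<bar> powr \<beta>" by (intro mult_right_mono) auto
    finally show "\<bar>f3 x - f3 y\<bar> \<le> max H 0 * \<bar>x - y\<bar> powr \<beta>" .
  qed auto
  obtain L1 where "\<forall>x\<in>S. \<forall>y\<in>S. \<bar>f1 x - f1 y\<bar> \<le> L1 * \<bar>x - y\<bar>"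
    using deriv_lip[of A B f1 f2] d1 c2 unfolding S_def by auto
  then have hol1: "hol \<beta> S f1" using lip_hol[of S A B \<beta> f1 L1] assms(1,2) S_def by auto
  obtain L2 where "\<forall>x\<in>S. \<forall>y\<in>S. \<bar>f2 x - f2 y\<bar> \<le> L2 * \<bar>x - y\<bar>"
    using deriv_lip[of A B f2 f3] d2 c3 unfolding S_def by auto
  then have hol2: "hol \<beta> S f2" using lip_hol[of S A B \<beta> f2 L2] assms(1,2) S_def by auto
  obtain x0 where x0: "x0 \<in> S" "\<forall>y\<in>S. f1 x0 \<le> f1 y"
    using continuous_attains_inf[of S f1] c1 AB unfolding S_def by auto
  define m where "m = f1 x0"
  have m: "m > 0" "\<forall>y\<in>S. m \<le> f1 y" using x0 pos m_def by auto
  have b2: "bdd S f2" and b3: "bdd S f3" using cont_bdd c2 c3 S_def by auto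
  have holi: "hol \<beta> S (\<lambda>x. 1 / f1 x)" using hol_inv[OF hol1 m] .
  have bi: "bdd S (\<lambda>x. 1 / f1 x)" unfolding bdd_def
  proof (intro exI[of _ "1/m"] ballI)
    fix x assume "x \<in> S"
    then show "\<bar>1 / f1 x\<bar> \<le> 1 / m" using m pos by (auto simp: frac_le)
  qed
  define p where "p x = f3 x * (1 / f1 x)" for x
  define q where "q x = f2 x * (1 / f1 x)" for x
  have holp: "hol \<beta> S p" unfolding p_def by (rule hol_mult[OF hol3 holi b3 bi])
  have holq: "hol \<beta> S q" unfolding q_def by (rule hol_mult[OF hol2 holi b2 bi])
  have bq: "bdd S q" unfolding q_def by (rule bdd_mult[OF b2 bi])
  have holqq: "hol \<beta> S (\<lambda>x. q x * q x)" by (rule hol_mult[OF holq holq bq bq])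
  define G where "G x = 1/2 * p x + (-1/2) * (q x * q x)" for x
  define Sc where "Sc x = 1 * p x + (-3/2) * (q x * q x)" for x
  have holG: "hol \<beta> S G" unfolding G_def
    by (intro hol_add hol_scale holp holqq)
  have holS: "hol \<beta> S Sc" unfolding Sc_def
    by (intro hol_add hol_scale holp holqq)
  obtain KG where KG: "KG \<ge> 0" "\<forall>x\<in>S. \<forall>y\<in>S. \<bar>G x - G y\<bar> \<le> KG * \<bar>x - y\<bar> powr \<beta>"
    using holG hol_def by auto
  obtain KS where KS: "KS \<ge> 0" "\<forall>x\<in>S. \<forall>y\<in>S. \<bar>Sc x - Sc y\<bar> \<le> KS * \<bar>x - y\<bar> powr \<beta>"
    using holS hol_def by auto
  define g where "g x = f2 x / (2 * f1 x)" for x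
  have dg: "(g has_real_derivative G x) (at x within S)" if "x \<in> S" for x
  proof -
    have "((\<lambda>x. f2 x / (2 * f1 x)) has_real_derivative
       (f3 x * (2 * f1 x) - f2 x * (2 * f2 x)) / (2 * f1 x) ^ 2) (at x within S)"
      using d1[OF that] d2[OF that] pos[OF that]
      by (auto intro!: derivative_eq_intros simp: power2_eq_square)
    moreover have "(f3 x * (2 * f1 x) - f2 x * (2 * f2 x)) / (2 * f1 x) ^ 2 = G x"
      using pos[OF that] unfolding G_def p_def q_def by (simp add: field_simps power2_eq_square)
    ultimately show ?thesis unfolding g_def by simp
  qed
  have taylor: "\<bar>g x1 - g t - G t * (x1 - t)\<bar> \<le> KG * \<bar>x1 - t\<bar> powr \<beta> * \<bar>x1 - t\<bar>"
    if t: "t \<in> S" and x1: "x1 \<in> S" for t x1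
  proof -
    define T where "T = {min t x1..max t x1}"
    have TS: "T \<subseteq> S" using t x1 unfolding T_def S_def by auto
    have "norm ((\<lambda>x. g x - G t * x) x1 - (\<lambda>x. g x - G t * x) t) \<le> (KG * \<bar>x1 - t\<bar> powr \<beta>) * norm (x1 - t)"
    proof (rule field_differentiable_bound[of T _ "\<lambda>z. G z - G t"])
      show "convex T" unfolding T_def by simp
      fix z assume z: "z \<in> T"
      show "((\<lambda>x. g x - G t * x) has_field_derivative G z - G t) (at z within T)"
        using dg[of z] z TS
        by (auto intro!: derivative_eq_intros intro: DERIV_subset)
      have "\<bar>G z - G t\<bar> \<le> KG * \<bar>z - t\<bar> powr \<beta>" using KG z TS t by auto
      also have "\<dots> \<le> KG * \<bar>x1 - t\<bar> powr \<beta>"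
        using z KG(1) assms(1) unfolding T_def by (intro mult_left_mono powr_mono2) auto
      finally show "norm (G z - G t) \<le> KG * \<bar>x1 - t\<bar> powr \<beta>" by simp
    qed (auto simp: T_def)
    then show ?thesis by (simp add: algebra_simps)
  qed
  show ?thesis
  proof (intro exI[of _ "KG + KS/3"] ballI)
    fix t x1 x2 x3 assume ts: "t \<in> {A..B}" and xs: "x1 \<in> {A..B}" "x2 \<in> {A..B}" "x3 \<in> {A..B}"
    define D where "D = Max {x1, x2, x3, t} - Min {x1, x2, x3, t}"
    have Dx: "D = max x1 (max x2 (max x3 t)) - min x1 (min x2 (min x3 t))"
      unfolding D_def by simp
    have D0: "D \<ge> 0" and D1: "\<bar>x1 - t\<bar> \<le> D" and D2: "\<bar>x2 + x3 - 2 * x1\<bar> \<le> 2 * D"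
      unfolding Dx by (auto simp: max_def min_def)
    have P: "\<bar>x1 - t\<bar> powr \<beta> \<le> D powr \<beta>" using D1 assms(1) by (intro powr_mono2) auto
    have tS: "t \<in> S" and x1S: "x1 \<in> S" using ts xs S_def by auto
    have ft: "f1 t > 0" and fx: "f1 x1 > 0" using pos tS x1S by auto
    have sch: "schwarzian f1 f2 f3 x1 = Sc x1"
      unfolding schwarzian_def Sc_def p_def q_def by (simp add: power2_eq_square)
    have E: "f2 t / (2 * f1 t) + f3 t / (6 * f1 t) * (x1 + x2 + x3 - 3 * t)
      - (f2 t / (2 * f1 t))^2 * (x2 + x3 - 2 * t)
      - f2 x1 / (2 * f1 x1) - 1/6 * schwarzian f1 f2 f3 x1 * (x2 + x3 - 2 * x1)
      = - (g x1 - g t - G t * (x1 - t)) + (Sc t - Sc x1) / 6 * (x2 + x3 - 2 * x1)"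
      unfolding sch g_def G_def Sc_def p_def q_def using ft fx
      by (simp add: field_simps power2_eq_square)
    have T1: "\<bar>g x1 - g t - G t * (x1 - t)\<bar> \<le> KG * (D powr \<beta> * D)"
    proof -
      have "\<bar>g x1 - g t - G t * (x1 - t)\<bar> \<le> KG * (\<bar>x1 - t\<bar> powr \<beta> * \<bar>x1 - t\<bar>)"
        using taylor[OF tS x1S] by (simp add: mult.assoc)
      also have "\<dots> \<le> KG * (D powr \<beta> * D)"
        using KG(1) P D1 by (intro mult_left_mono mult_mono) auto
      finally show ?thesis .
    qed
    have T2: "\<bar>(Sc t - Sc x1) / 6 * (x2 + x3 - 2 * x1)\<bar> \<le> KS / 3 * (D powr \<beta> * D)"
    proof -
      have "\<bar>Sc t - Sc x1\<bar> \<le> KS * \<bar>t - x1\<bar> powr \<beta>" using KS tS x1S by auto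
      also have "\<dots> \<le> KS * D powr \<beta>" unfolding abs_minus_commute[of t x1] by (rule mult_left_mono[OF P KS(1)])
      finally have "\<bar>Sc t - Sc x1\<bar> \<le> KS * D powr \<beta>" .
      then have "\<bar>Sc t - Sc x1\<bar> * \<bar>x2 + x3 - 2 * x1\<bar> \<le> (KS * D powr \<beta>) * (2 * D)"
        using D2 by (intro mult_mono) auto
      then show ?thesis by (simp add: abs_mult abs_divide)
    qed
    have pw: "D powr \<beta> * D = D powr (1 + \<beta>)"
    proof (cases "D = 0")
      case False then show ?thesis using D0 by (simp add: powr_add)
    qed simp
    have "\<bar>- (g x1 - g t - G t * (x1 - t)) + (Sc t - Sc x1) / 6 * (x2 + x3 - 2 * x1)\<bar>
        \<le> (KG + KS/3) * (D powr \<beta> * D)"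
    proof -
      let ?a = "- (g x1 - g t - G t * (x1 - t))" and ?b = "(Sc t - Sc x1) / 6 * (x2 + x3 - 2 * x1)"
      have "\<bar>?a + ?b\<bar> \<le> \<bar>?a\<bar> + \<bar>?b\<bar>" by (rule abs_triangle_ineq)
      also have "\<dots> \<le> KG * (D powr \<beta> * D) + KS / 3 * (D powr \<beta> * D)"
        using T1 T2 by (intro add_mono) (simp_all only: abs_minus_cancel)
      also have "\<dots> = (KG + KS/3) * (D powr \<beta> * D)" by (simp only: distrib_right)
      finally show ?thesis .
    qed
    then show "\<bar>f2 t / (2 * f1 t) + f3 t / (6 * f1 t) * (x1 + x2 + x3 - 3 * t)
      - (f2 t / (2 * f1 t))^2 * (x2 + x3 - 2 * t)
      - f2 x1 / (2 * f1 x1) - 1/6 * schwarzian f1 f2 f3 x1 * (x2 + x3 - 2 * x1)\<bar>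
      \<le> (KG + KS/3) * (Max {x1, x2, x3, t} - Min {x1, x2, x3, t}) powr (1 + \<beta>)"
      unfolding E using pw D_def by simp
  qed
qed

end
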